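(* Let $E\subset\mathbb{R}^N$ be convex. Then for every $h>0$ and every $c\in\mathbb{R}$, the set \[ T_{c,h}(E):=\Big\{x\in\mathbb{R}^N:\ P_h*(\chi_E-\chi_{\mathbb{R}^N\setminus E})(x)>c\,h^{\frac{s}{1+s}}\Big\} \] is convex.
   Context: Fix $N\ge1$, $s\in(0,1)$ and a norm $\mathcal N$ on $\mathbb{R}^N$ (convex, even, positively $1$-homogeneous, with $\underline c|x|\le\mathcal N(x)\le\overline c|x|$, $0<\underline c\le\overline c$). $P(x)=\frac{1}{1+\mathcal N(x)^{N+s}}$, $\sigma_h=h^{s/(1+s)}$, $P_h(x)=\sigma_h^{-N/s}P(x/\sigma_h^{1/s})$. *)

theory Defs
  imports "HOL-Analysis.Analysis"
begin

definition aniso_norm :: "('a::euclidean_space \<Rightarrow> real) \<Rightarrow> bool" where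
  "aniso_norm Nn \<longleftrightarrow> convex_on UNIV Nn \<and> (\<forall>x. Nn (- x) = Nn x)
     \<and> (\<forall>t x. t \<ge> 0 \<longrightarrow> Nn (t *\<^sub>R x) = t * Nn x)
     \<and> (\<exists>cl ch. 0 < cl \<and> cl \<le> ch \<and> (\<forall>x. cl * norm x \<le> Nn x \<and> Nn x \<le> ch * norm x))"

definition kerP :: "('a::euclidean_space \<Rightarrow> real) \<Rightarrow> real \<Rightarrow> 'a \<Rightarrow> real" where
  "kerP Nn s x = 1 / (1 + Nn x powr (real DIM('a) + s))"

definition sigma_h :: "real \<Rightarrow> real \<Rightarrow> real" where
  "sigma_h s h = h powr (s / (1 + s))"

definition kerPh :: "('a::euclidean_space \<Rightarrow> real) \<Rightarrow> real \<Rightarrow> real \<Rightarrow> 'a \<Rightarrow> real" where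
  "kerPh Nn s h x = sigma_h s h powr (- real DIM('a) / s)
      * kerP Nn s ((1 / sigma_h s h powr (1 / s)) *\<^sub>R x)"

definition conv :: "('a::euclidean_space \<Rightarrow> real) \<Rightarrow> ('a \<Rightarrow> real) \<Rightarrow> 'a \<Rightarrow> real" where
  "conv f g x = (\<integral>y. f (x - y) * g y \<partial>lborel)"

definition Tset :: "('a::euclidean_space \<Rightarrow> real) \<Rightarrow> real \<Rightarrow> real \<Rightarrow> real \<Rightarrow> 'a set \<Rightarrow> 'a set" where
  "Tset Nn s c h E = {x. conv (kerPh Nn s h) (\<lambda>y. indicator E y - indicator (UNIV - E) y) x
                          > c * h powr (s / (1 + s))}"

end

theory Submission
  imports Defs
begin

definition kc :: "nat \<Rightarrow> real \<Rightarrow> real \<Rightarrow> real \<Rightarrow> real \<Rightarrow> bool" where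
 "kc k l a b c \<longleftrightarrow> (0 < a \<longrightarrow> 0 < b \<longrightarrow> 0 < c \<and> (if k = 0 then min a b \<le> c
    else c powr (-1/real k) \<le> (1-l) * a powr (-1/real k) + l * b powr (-1/real k)))"

lemma kc_min:
  assumes "kc k l a b c" "0 \<le> l" "l \<le> 1" "0 \<le> a" "0 \<le> b" "0 \<le> c"
  shows "min a b \<le> c"
proof (cases "a > 0 \<and> b > 0")
  case True
  show ?thesis
  proof (cases "k = 0")
    case True with assms \<open>a>0 \<and> b>0\<close> show ?thesis by (auto simp: kc_def)
  next
    case False
    let ?e = "-1/real k"
    have e: "?e < 0" using False by simp
    have c: "c > 0" and ci: "c powr ?e \<le> (1-l) * a powr ?e + l * b powr ?e"
      using assms True False by (auto simp: kc_def)
    have "a powr ?e \<le> (min a b) powr ?e" "b powr ?e \<le> (min a b) powr ?e"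
      using True e by (auto intro!: powr_mono2' simp: min_def)
    then have "(1-l) * a powr ?e + l * b powr ?e \<le> (1-l) * (min a b) powr ?e + l * (min a b) powr ?e"
      using assms by (intro add_mono mult_left_mono) auto
    also have "\<dots> = (min a b) powr ?e" by (simp add: algebra_simps)
    finally have "c powr ?e \<le> (min a b) powr ?e" using ci by linarith
    then show ?thesis using e c True
      by (smt (verit) powr_less_mono2_neg)
  qed
next
  case False
  then show ?thesis using assms by auto
qed

lemma powr_mix_convex:
  fixes q t0 t1 th :: real
  assumes "q \<ge> 1" "t0 > 0" "t1 > 0" "0 \<le> th" "th \<le> 1"
  shows "((1-th)*t0 + th*t1) powr q \<le> (1-th) * t0 powr q + th * t1 powr q"
  using convex_onD[OF powr_convex[OF assms(1)], of th t0 t1] assms by simp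

lemma wpos: fixes l x y :: real assumes "0 \<le> l" "l \<le> 1" "x > 0" "y > 0"
  shows "(1-l)*x + l*y > 0"
proof (cases "l < 1")
  case True then show ?thesis using assms by (smt (verit) mult_pos_pos mult_nonneg_nonneg)
next
  case False then show ?thesis using assms by simp
qed

lemma alg_holder:
  fixes k :: nat and l a b A B H :: real
  assumes l: "0 \<le> l" "l \<le> 1" and pos: "a > 0" "b > 0" "A > 0" "B > 0"
  defines "m \<equiv> ((1-l) * a powr (-1/real (Suc k)) + l * b powr (-1/real (Suc k))) powr (- real (Suc k))"
  assumes H: "H \<ge> m * ((1-l) * (A/a) + l * (B/b))"
  shows "kc k l A B H"
proof -
  define e' where "e' = -1/real (Suc k)"
  define S where "S = (1-l) * a powr e' + l * b powr e'"
  define U where "U = (1-l) * (A/a) + l * (B/b)"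
  have Spos: "S > 0" unfolding S_def using l pos by (intro wpos) auto
  have Upos: "U > 0" unfolding U_def using l pos by (intro wpos) auto
  have m: "m = S powr (- real (Suc k))" unfolding m_def S_def e'_def by simp
  have mpos: "m > 0" using m Spos by simp
  have Hpos: "H > 0" using H mpos Upos unfolding U_def
    by (smt (verit) mult_pos_pos)
  show ?thesis
  proof (cases "k = 0")
    case True
    have m0: "m = 1 / ((1-l)/a + l/b)" using True unfolding m_def
      using pos l wpos[of l "inverse a" "inverse b"] by (simp add: powr_minus_divide divide_inverse powr_minus)
    have "min A B * ((1-l)/a + l/b) = (1-l)*(min A B/a) + l*(min A B/b)" by (simp add: field_simps)
    also have "\<dots> \<le> (1-l) * (A/a) + l * (B/b)"
      using l pos by (intro add_mono mult_left_mono divide_right_mono) auto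
    finally have "min A B * ((1-l)/a + l/b) \<le> (1-l) * (A/a) + l * (B/b)" .
    moreover have "(1-l)/a + l/b > 0" using l pos wpos[of l "1/a" "1/b"] by simp
    ultimately have "min A B \<le> m * ((1-l) * (A/a) + l * (B/b))"
      unfolding m0 by (simp add: field_simps)
    then show ?thesis using True H Hpos by (auto simp: kc_def)
  next
    case False
    define e where "e = -1/real k"
    define q where "q = real (Suc k) / real k"
    have q1: "q \<ge> 1" using False unfolding q_def by (simp add: field_simps)
    have e0: "e < 0" using False unfolding e_def by simp
    define th where "th = l * (B/b) / U"
    have th3: "1 - th = (1-l) * (A/a) / U"
    proof -
      have "1 - th = (U - l*(B/b))/U" using Upos by (simp add: th_def field_simps)
      also have "U - l*(B/b) = (1-l)*(A/a)" unfolding U_def by simp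
      finally show ?thesis .
    qed
    have th: "0 \<le> th" "th \<le> 1" "1 - th = (1-l) * (A/a) / U"
    proof -
      show "0 \<le> th" unfolding th_def using l pos Upos by simp
      have "0 \<le> (1-l) * (A/a) / U" using l pos Upos by simp
      then show "th \<le> 1" using th3 by linarith
      show "1 - th = (1-l) * (A/a) / U" by (rule th3)
    qed
    define t0 where "t0 = a powr e' / (A/a)"
    define t1 where "t1 = b powr e' / (B/b)"
    have t0: "t0 > 0" and t1: "t1 > 0" using pos unfolding t0_def t1_def by auto
    have SU: "S / U = (1-th)*t0 + th*t1"
    proof -
      have "(1-th)*t0 = ((1-l)*(A/a)/U) * (a powr e' / (A/a))" unfolding th(3) t0_def ..
      also have "\<dots> = (1-l)*a powr e' / U" using pos Upos by (simp add: field_simps)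
      finally have 1: "(1-th)*t0 = (1-l)*a powr e' / U" .
      have 2: "th*t1 = l * b powr e'/U" using pos Upos by (simp add: th_def t1_def field_simps)
      show ?thesis unfolding 1 2 S_def by (simp add: add_divide_distrib)
    qed
    have conv: "(S/U) powr q \<le> (1-th) * t0 powr q + th * t1 powr q"
      unfolding SU by (rule powr_mix_convex[OF q1 t0 t1 th(1,2)])
    have qe: "1 - q = e" "e' * q = e" using False unfolding q_def e_def e'_def by (auto simp: field_simps)
    have key0: "(A/a) * (a powr e' / (A/a)) powr q = A powr e" if "A > 0" "a > 0" for A a :: real
    proof -
      have "(A/a) * (a powr e' / (A/a)) powr q = (A/a) * ((a powr e') powr q / (A/a) powr q)"
        using that by (subst powr_divide) auto
      also have "\<dots> = a powr (e' * q) * ((A/a) powr 1 / (A/a) powr q)"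
        using that by (simp add: powr_powr)
      also have "(A/a) powr 1 / (A/a) powr q = (A/a) powr (1 - q)"
        using that by (simp add: powr_diff)
      also have "a powr (e' * q) * (A/a) powr (1 - q) = a powr e * (A powr e / a powr e)"
        using that qe by (simp add: powr_divide)
      also have "\<dots> = A powr e" using that by simp
      finally show ?thesis .
    qed
    have "H powr e \<le> (m * U) powr e"
      using H Hpos mpos Upos e0 unfolding U_def by (intro powr_mono2') auto
    also have "(m * U) powr e = S powr q * U powr e"
    proof -
      have "(m * U) powr e = m powr e * U powr e" using mpos Upos by (simp add: powr_mult)
      also have "m powr e = S powr (- real (Suc k) * e)" unfolding m using Spos by (simp add: powr_powr)
      also have "- real (Suc k) * e = q" unfolding e_def q_def by (simp add: divide_simps)
      finally show ?thesis .
    qed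
    also have "\<dots> = U * (S/U) powr q"
    proof -
      have "U * (S/U) powr q = U powr 1 * (S powr q / U powr q)" using Spos Upos by (simp add: powr_divide)
      also have "\<dots> = S powr q * (U powr 1 / U powr q)" by simp
      also have "U powr 1 / U powr q = U powr e" using Upos qe powr_diff[of U 1 q] by (simp del: powr_one_gt_zero_iff)
      finally show ?thesis by simp
    qed
    also have "\<dots> \<le> U * ((1-th) * t0 powr q + th * t1 powr q)"
      using conv Upos by simp
    also have "\<dots> = (1-l) * ((A/a) * t0 powr q) + l * ((B/b) * t1 powr q)"
    proof -
      have u1: "U * (1-th) = (1-l) * (A/a)" using th(3) Upos by simp
      have u2: "U * th = l * (B/b)" using Upos unfolding th_def by simp
      have "U * ((1-th) * t0 powr q + th * t1 powr q) = (U * (1-th)) * t0 powr q + (U * th) * t1 powr q"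
        by (simp add: algebra_simps)
      then show ?thesis unfolding u1 u2 by simp
    qed
    also have "\<dots> = (1-l) * A powr e + l * B powr e"
      unfolding t0_def t1_def using key0[of A a] key0[of B b] pos by simp
    finally show ?thesis using False Hpos unfolding e_def by (auto simp: kc_def)
  qed
qed

lemma diam_meas:
  fixes A :: "real set" and x :: real
  assumes "A \<noteq> {}" "x < measure lborel A" "emeasure lborel A < \<infinity>"
  shows "\<exists>a0\<in>A. \<exists>a1\<in>A. x \<le> a1 - a0"
proof (rule ccontr)
  assume H: "\<not> ?thesis"
  then have H': "\<And>a0 a1. a0 \<in> A \<Longrightarrow> a1 \<in> A \<Longrightarrow> a1 < a0 + x" by force
  obtain a where a: "a \<in> A" using assms by auto
  have bdd: "bdd_above A" "bdd_below A"
  proof -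
    show "bdd_above A" unfolding bdd_above_def using H'[OF a] by (metis less_eq_real_def)
    have "\<forall>a0\<in>A. a - x \<le> a0" using H'[OF _ a] by (simp add: algebra_simps less_imp_le)
    then show "bdd_below A" unfolding bdd_below_def by blast
  qed
  define s where "s = Sup A"
  define i where "i = Inf A"
  have sub: "A \<subseteq> {i..s}" using bdd unfolding s_def i_def by (auto intro: cSup_upper cInf_lower)
  have "s \<le> a0 + x" if "a0 \<in> A" for a0
    unfolding s_def using assms(1) H'[OF that] by (intro cSup_least) (auto simp: less_imp_le)
  then have "s - x \<le> i" unfolding i_def using assms(1) by (intro cInf_greatest) (auto simp: algebra_simps)
  have "emeasure lborel A \<le> emeasure lborel {i..s}" by (rule emeasure_mono[OF sub]) auto
  also have "\<dots> = ennreal (s - i)" using sub a by auto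
  finally have "ennreal (measure lborel A) \<le> ennreal (s - i)"
    using assms(3) by (simp add: emeasure_eq_ennreal_measure)
  then have "measure lborel A \<le> s - i"
    using sub a by (subst (asm) ennreal_le_iff) auto
  then show False using \<open>s - x \<le> i\<close> assms(2) by linarith
qed

lemma interval_mix:
  fixes l a0 a1 b0 b1 w :: real
  assumes "0 \<le> l" "l \<le> 1" "a0 \<le> a1" "b0 \<le> b1"
    and "(1-l)*a0 + l*b0 \<le> w" "w \<le> (1-l)*a1 + l*b1"
  shows "\<exists>th. 0 \<le> th \<and> th \<le> 1 \<and> w = (1-l)*((1-th)*a0 + th*a1) + l*((1-th)*b0 + th*b1)"
proof -
  define d where "d = (1-l)*(a1-a0) + l*(b1-b0)"
  have d0: "d \<ge> 0" unfolding d_def using assms by simp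
  show ?thesis
  proof (cases "d = 0")
    case True
    then have "w = (1-l)*a0 + l*b0" using assms unfolding d_def by (simp add: algebra_simps)
    then show ?thesis by (intro exI[of _ 0]) simp
  next
    case False
    define th where "th = (w - ((1-l)*a0 + l*b0)) / d"
    have "th \<le> 1" unfolding th_def using False d0 assms by (simp add: divide_le_eq_1 d_def algebra_simps)
    moreover have "th \<ge> 0" unfolding th_def using d0 assms by simp
    moreover have "(1-l)*((1-th)*a0 + th*a1) + l*((1-th)*b0 + th*b1) = ((1-l)*a0 + l*b0) + th * d"
      unfolding d_def by (simp add: algebra_simps)
    moreover have "th * d = w - ((1-l)*a0 + l*b0)" unfolding th_def using False by simp
    ultimately show ?thesis by (intro exI[of _ th]) simp
  qed
qed

lemma diam_meas':
  fixes A :: "real set" and x :: real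
  assumes "A \<noteq> {}" "x < measure lborel A" "emeasure lborel A < \<infinity>"
  shows "\<exists>a0\<in>A. \<exists>a1\<in>A. a0 \<le> a1 \<and> x \<le> a1 - a0"
proof -
  obtain a0 a1 where a: "a0 \<in> A" "a1 \<in> A" "x \<le> a1 - a0" using diam_meas[OF assms] by blast
  show ?thesis
  proof (cases "a0 \<le> a1")
    case True with a show ?thesis by blast
  next
    case False with a show ?thesis by (intro bexI[of _ a0]) auto
  qed
qed

lemma BM1:
  fixes A B C :: "real set" and l :: real
  assumes l: "0 \<le> l" "l \<le> 1"
    and ne: "A \<noteq> {}" "B \<noteq> {}" and cv: "convex A" "convex B"
    and fin: "emeasure lborel A < \<infinity>" "emeasure lborel B < \<infinity>" "emeasure lborel C < \<infinity>"
    and C: "C \<in> sets lborel"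
    and mix: "\<And>a b. a \<in> A \<Longrightarrow> b \<in> B \<Longrightarrow> (1-l)*a + l*b \<in> C"
  shows "(1-l) * measure lborel A + l * measure lborel B \<le> measure lborel C"
proof (rule field_le_epsilon)
  fix e :: real assume e: "e > 0"
  obtain a0 a1 where a: "a0 \<in> A" "a1 \<in> A" "a0 \<le> a1" "measure lborel A - e \<le> a1 - a0"
    using diam_meas'[OF ne(1) _ fin(1), of "measure lborel A - e"] e by auto
  obtain b0 b1 where b: "b0 \<in> B" "b1 \<in> B" "b0 \<le> b1" "measure lborel B - e \<le> b1 - b0"
    using diam_meas'[OF ne(2) _ fin(2), of "measure lborel B - e"] e by auto
  define w0 where "w0 = (1-l)*a0 + l*b0"
  define w1 where "w1 = (1-l)*a1 + l*b1"
  have sub: "{w0..w1} \<subseteq> C"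
  proof
    fix w assume "w \<in> {w0..w1}"
    then obtain th where th: "0 \<le> th" "th \<le> 1" "w = (1-l)*((1-th)*a0 + th*a1) + l*((1-th)*b0 + th*b1)"
      using interval_mix[OF l a(3) b(3)] unfolding w0_def w1_def by auto
    have "(1-th)*a0 + th*a1 \<in> A" using convexD_alt[OF cv(1) a(1,2) th(1,2)] by (simp add: algebra_simps)
    moreover have "(1-th)*b0 + th*b1 \<in> B" using convexD_alt[OF cv(2) b(1,2) th(1,2)] by (simp add: algebra_simps)
    ultimately show "w \<in> C" using mix th(3) by simp
  qed
  have w01: "w0 \<le> w1" unfolding w0_def w1_def using a(3) b(3) l
    by (intro add_mono mult_left_mono) auto
  have "ennreal (w1 - w0) = emeasure lborel {w0..w1}" using w01 by simp
  also have "\<dots> \<le> emeasure lborel C" by (rule emeasure_mono[OF sub C])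
  also have "\<dots> = ennreal (measure lborel C)" using fin(3) by (simp add: emeasure_eq_ennreal_measure)
  finally have "w1 - w0 \<le> measure lborel C" using w01 by (subst (asm) ennreal_le_iff) auto
  moreover have "(1-l) * (measure lborel A - e) + l * (measure lborel B - e) \<le> w1 - w0"
  proof -
    have "(1-l) * (measure lborel A - e) \<le> (1-l) * (a1 - a0)" using a(4) l by (intro mult_left_mono) auto
    moreover have "l * (measure lborel B - e) \<le> l * (b1 - b0)" using b(4) l by (intro mult_left_mono) auto
    ultimately show ?thesis unfolding w0_def w1_def by (simp add: algebra_simps)
  qed
  ultimately show "(1-l) * measure lborel A + l * measure lborel B \<le> measure lborel C + e"
    by (simp add: algebra_simps)
qed

lemma layer_point:
  fixes c v :: real
  assumes "c > 0" "v \<ge> 0"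
  shows "(\<integral>\<^sup>+r. (if 0 < r \<and> r < 1 \<and> r * c < v then 1 else 0) \<partial>lborel) = ennreal (min 1 (v / c))"
proof -
  have "(\<lambda>r. (if 0 < r \<and> r < 1 \<and> r * c < v then 1 else 0) :: ennreal) = indicator {0<..<min 1 (v/c)}"
    using assms by (auto simp: fun_eq_iff indicator_def field_simps)
  moreover have "min 1 (v/c) \<ge> 0" using assms by simp
  ultimately show ?thesis by simp
qed

lemma layer_meas[measurable]:
  fixes f :: "real \<Rightarrow> real"
  assumes [measurable]: "f \<in> borel_measurable lborel"
  shows "(\<lambda>(t, r). (if 0 < r \<and> r < 1 \<and> r * c < f t then 1 else 0) :: ennreal) \<in> borel_measurable (lborel \<Otimes>\<^sub>M lborel)"
  by measurable

lemma layer_fubini: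
  fixes f :: "real \<Rightarrow> real"
  assumes [measurable]: "f \<in> borel_measurable lborel" and c: "c > 0" and nn: "\<And>t. f t \<ge> 0"
  shows "(\<integral>\<^sup>+t. ennreal (min c (f t)) \<partial>lborel) =
     ennreal c * (\<integral>\<^sup>+r. (\<integral>\<^sup>+t. (if 0 < r \<and> r < 1 \<and> r * c < f t then 1 else 0) \<partial>lborel) \<partial>lborel)"
proof -
  have "(\<integral>\<^sup>+t. ennreal (min c (f t)) \<partial>lborel) =
     (\<integral>\<^sup>+t. ennreal c * (\<integral>\<^sup>+r. (if 0 < r \<and> r < 1 \<and> r * c < f t then 1 else 0) \<partial>lborel) \<partial>lborel)"
  proof (rule nn_integral_cong)
    fix t
    have "ennreal c * ennreal (min 1 (f t / c)) = ennreal (c * min 1 (f t / c))"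
      using c nn by (simp add: ennreal_mult)
    also have "c * min 1 (f t / c) = min c (f t)" using c by (simp add: min_def field_simps)
    finally show "ennreal (min c (f t)) = ennreal c * (\<integral>\<^sup>+r. (if 0 < r \<and> r < 1 \<and> r * c < f t then 1 else 0) \<partial>lborel)"
      using layer_point[OF c nn[of t]] by simp
  qed
  also have "\<dots> = ennreal c * (\<integral>\<^sup>+t. (\<integral>\<^sup>+r. (if 0 < r \<and> r < 1 \<and> r * c < f t then 1 else 0) \<partial>lborel) \<partial>lborel)"
    by (rule nn_integral_cmult) measurable
  also have "(\<integral>\<^sup>+t. (\<integral>\<^sup>+r. (if 0 < r \<and> r < 1 \<and> r * c < f t then 1 else 0) \<partial>lborel) \<partial>lborel)
      = (\<integral>\<^sup>+r. (\<integral>\<^sup>+t. (if 0 < r \<and> r < 1 \<and> r * c < f t then 1 else 0) \<partial>lborel) \<partial>lborel)"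
    by (rule lborel_pair.Fubini'[symmetric]) measurable
  finally show ?thesis .
qed

lemma layer_inner:
  fixes f :: "real \<Rightarrow> real"
  assumes [measurable]: "f \<in> borel_measurable lborel"
  shows "(\<integral>\<^sup>+t. (if 0 < r \<and> r < 1 \<and> r * c < f t then 1 else 0) \<partial>lborel) =
     indicator {0<..<1} r * emeasure lborel {t. r * c < f t}"
proof (cases "0 < r \<and> r < 1")
  case True
  then have "(\<lambda>t. (if 0 < r \<and> r < 1 \<and> r * c < f t then 1 else 0) :: ennreal) = indicator {t. r * c < f t}"
    by (auto simp: fun_eq_iff)
  moreover have "{t. r * c < f t} \<in> sets lborel" by measurable
  ultimately show ?thesis using True by simp
qed auto

lemma wstrict:
  fixes l x y x' y' :: real
  assumes "0 \<le> l" "l \<le> 1" "x < x'" "y < y'"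
  shows "(1-l)*x + l*y < (1-l)*x' + l*y'"
proof (cases "l < 1")
  case True
  then have "(1-l)*x < (1-l)*x'" using assms by simp
  moreover have "l*y \<le> l*y'" using assms by (intro mult_left_mono) auto
  ultimately show ?thesis by simp
next
  case False then show ?thesis using assms by simp
qed

lemma markov_level:
  fixes f :: "real \<Rightarrow> real"
  assumes [measurable]: "f \<in> borel_measurable lborel" and c: "c > 0" and nn: "\<And>t. f t \<ge> 0"
    and fin: "(\<integral>\<^sup>+t. ennreal (f t) \<partial>lborel) < \<infinity>"
  shows "emeasure lborel {t. c < f t} < \<infinity>"
proof -
  have "ennreal c * emeasure lborel {t. c < f t} = (\<integral>\<^sup>+t. ennreal c * indicator {t. c < f t} t \<partial>lborel)"
    by (subst nn_integral_cmult_indicator) (auto)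
  also have "\<dots> \<le> (\<integral>\<^sup>+t. ennreal (f t) \<partial>lborel)"
    by (intro nn_integral_mono) (auto simp: indicator_def intro!: ennreal_leI dest: less_imp_le)
  finally have "ennreal c * emeasure lborel {t. c < f t} < \<infinity>" using fin by (simp add: le_less_trans)
  then have "emeasure lborel {t. c < f t} = 0 \<or> emeasure lborel {t. c < f t} < top"
    using c by (simp add: ennreal_mult_less_top)
  then show ?thesis by (metis ennreal_zero_less_top infinity_ennreal_def)
qed

lemma level_convex:
  fixes f :: "real \<Rightarrow> real"
  assumes qc: "\<And>t t' u. 0 \<le> u \<Longrightarrow> u \<le> 1 \<Longrightarrow> min (f t) (f t') \<le> f ((1-u)*t + u*t')"
  shows "convex {t. c < f t}"
proof (rule convexI)
  fix x y :: real and u v :: real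
  assume "x \<in> {t. c < f t}" "y \<in> {t. c < f t}" "0 \<le> u" "0 \<le> v" "u + v = 1"
  then have u: "u = 1 - v" "v \<le> 1" by auto
  have "c < min (f x) (f y)" using \<open>x \<in> _\<close> \<open>y \<in> _\<close> by simp
  also have "\<dots> \<le> f ((1 - v) * x + v * y)" using qc[of v x y] u \<open>0 \<le> v\<close> by simp
  finally show "u *\<^sub>R x + v *\<^sub>R y \<in> {t. c < f t}" using u by simp
qed

lemma sup_props:
  fixes g :: "real \<Rightarrow> real"
  assumes [measurable]: "g \<in> borel_measurable lborel" and nn: "\<And>t. g t \<ge> 0"
    and bd: "\<And>t. g t \<le> B"
    and pos: "enn2real (\<integral>\<^sup>+t. ennreal (g t) \<partial>lborel) > 0"
  shows "Sup (range g) > 0" "\<And>t. g t \<le> Sup (range g)"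
    "\<And>r. r < Sup (range g) \<Longrightarrow> {t. r < g t} \<noteq> {}"
proof -
  have bdd: "bdd_above (range g)" using bd by (auto intro!: bdd_aboveI)
  show le: "\<And>t. g t \<le> Sup (range g)" using bdd by (auto intro: cSup_upper)
  show "\<And>r. r < Sup (range g) \<Longrightarrow> {t. r < g t} \<noteq> {}"
    using bdd by (auto simp: less_cSup_iff)
  show "Sup (range g) > 0"
  proof (rule ccontr)
    assume "\<not> Sup (range g) > 0"
    then have "\<And>t. g t = 0" using le nn by (meson antisym not_less order_trans)
    then show False using pos by simp
  qed
qed

lemma L1:
  fixes g0 g1 g :: "real \<Rightarrow> real" and k :: nat and l :: real
  assumes l: "0 \<le> l" "l \<le> 1"
    and nn: "\<And>t. g0 t \<ge> 0" "\<And>t. g1 t \<ge> 0" "\<And>t. g t \<ge> 0"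
    and meas[measurable]: "g0 \<in> borel_measurable lborel" "g1 \<in> borel_measurable lborel" "g \<in> borel_measurable lborel"
    and bd: "\<And>t. g0 t \<le> B0" "\<And>t. g1 t \<le> B1"
    and fin: "(\<integral>\<^sup>+t. ennreal (g0 t) \<partial>lborel) < \<infinity>" "(\<integral>\<^sup>+t. ennreal (g1 t) \<partial>lborel) < \<infinity>"
       "(\<integral>\<^sup>+t. ennreal (g t) \<partial>lborel) < \<infinity>"
    and qc0: "\<And>t t' u. 0 \<le> u \<Longrightarrow> u \<le> 1 \<Longrightarrow> min (g0 t) (g0 t') \<le> g0 ((1-u)*t + u*t')"
    and qc1: "\<And>t t' u. 0 \<le> u \<Longrightarrow> u \<le> 1 \<Longrightarrow> min (g1 t) (g1 t') \<le> g1 ((1-u)*t + u*t')"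
    and hyp: "\<And>t0 t1. kc (Suc k) l (g0 t0) (g1 t1) (g ((1-l)*t0 + l*t1))"
  shows "kc k l (enn2real (\<integral>\<^sup>+t. ennreal (g0 t) \<partial>lborel)) (enn2real (\<integral>\<^sup>+t. ennreal (g1 t) \<partial>lborel))
            (enn2real (\<integral>\<^sup>+t. ennreal (g t) \<partial>lborel))"
proof -
  define J0 where "J0 = (\<integral>\<^sup>+t. ennreal (g0 t) \<partial>lborel)"
  define J1 where "J1 = (\<integral>\<^sup>+t. ennreal (g1 t) \<partial>lborel)"
  define J where "J = (\<integral>\<^sup>+t. ennreal (g t) \<partial>lborel)"
  {
    assume I0: "enn2real J0 > 0" and I1: "enn2real J1 > 0"
    define a where "a = Sup (range g0)"
    define b where "b = Sup (range g1)"
    note A = sup_props[OF meas(1) nn(1) bd(1) I0[unfolded J0_def], folded a_def]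
    note B = sup_props[OF meas(2) nn(2) bd(2) I1[unfolded J1_def], folded b_def]
    define e where "e = -1 / real (Suc k)"
    have e0: "e < 0" unfolding e_def by simp
    define S where "S = (1-l) * a powr e + l * b powr e"
    have Spos: "S > 0" unfolding S_def using A(1) B(1) l by (intro wpos) auto
    define m where "m = S powr (- real (Suc k))"
    have mpos: "m > 0" unfolding m_def using Spos by simp
    have me1: "- real (Suc k) * e = 1" unfolding e_def by (simp add: divide_simps)
    have me: "m powr e = S" unfolding m_def using Spos me1 by (simp add: powr_powr)
    define F0 where "F0 = (\<lambda>r. (\<integral>\<^sup>+t. (if 0 < r \<and> r < 1 \<and> r * a < g0 t then 1 else 0) \<partial>lborel) :: ennreal)"
    define F1 where "F1 = (\<lambda>r. (\<integral>\<^sup>+t. (if 0 < r \<and> r < 1 \<and> r * b < g1 t then 1 else 0) \<partial>lborel) :: ennreal)"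
    define F where "F = (\<lambda>r. (\<integral>\<^sup>+t. (if 0 < r \<and> r < 1 \<and> r * m < g t then 1 else 0) \<partial>lborel) :: ennreal)"
    have [measurable]: "F0 \<in> borel_measurable lborel" "F1 \<in> borel_measurable lborel" "F \<in> borel_measurable lborel"
      unfolding F0_def F1_def F_def by measurable
    have J0eq: "J0 = ennreal a * (\<integral>\<^sup>+r. F0 r \<partial>lborel)"
    proof -
      have "J0 = (\<integral>\<^sup>+t. ennreal (min a (g0 t)) \<partial>lborel)"
        unfolding J0_def using A(2) by (intro nn_integral_cong) (simp add: min_absorb2)
      then show ?thesis unfolding F0_def using layer_fubini[OF meas(1) A(1) nn(1)] by simp
    qed
    have J1eq: "J1 = ennreal b * (\<integral>\<^sup>+r. F1 r \<partial>lborel)"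
    proof -
      have "J1 = (\<integral>\<^sup>+t. ennreal (min b (g1 t)) \<partial>lborel)"
        unfolding J1_def using B(2) by (intro nn_integral_cong) (simp add: min_absorb2)
      then show ?thesis unfolding F1_def using layer_fubini[OF meas(2) B(1) nn(2)] by simp
    qed
    have Jge: "ennreal m * (\<integral>\<^sup>+r. F r \<partial>lborel) \<le> J"
    proof -
      have "ennreal m * (\<integral>\<^sup>+r. F r \<partial>lborel) = (\<integral>\<^sup>+t. ennreal (min m (g t)) \<partial>lborel)"
        unfolding F_def using layer_fubini[OF meas(3) mpos nn(3)] by simp
      also have "\<dots> \<le> J" unfolding J_def by (intro nn_integral_mono ennreal_leI) auto
      finally show ?thesis .
    qed
    have pt: "ennreal (1-l) * F0 r + ennreal l * F1 r \<le> F r" for r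
    proof (cases "0 < r \<and> r < 1")
      case False
      then show ?thesis unfolding F0_def F1_def F_def
        using layer_inner[OF meas(1), of r a] layer_inner[OF meas(2), of r b] by simp
    next
      case True
      define L0 where "L0 = {t. r * a < g0 t}"
      define L1 where "L1 = {t. r * b < g1 t}"
      define L where "L = {t. r * m < g t}"
      have ra: "r * a > 0" "r * a < a" using True A(1) by auto
      have rb: "r * b > 0" "r * b < b" using True B(1) by auto
      have rm: "r * m > 0" using True mpos by auto
      have fin0: "emeasure lborel L0 < \<infinity>" unfolding L0_def
        using markov_level[OF meas(1) ra(1) nn(1) fin(1)] .
      have fin1: "emeasure lborel L1 < \<infinity>" unfolding L1_def
        using markov_level[OF meas(2) rb(1) nn(2) fin(2)] .
      have finL: "emeasure lborel L < \<infinity>" unfolding L_def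
        using markov_level[OF meas(3) rm nn(3) fin(3)] .
      have mix: "(1-l)*t0 + l*t1 \<in> L" if "t0 \<in> L0" "t1 \<in> L1" for t0 t1
      proof -
        have p0: "g0 t0 > r * a" and p1: "g1 t1 > r * b" using that unfolding L0_def L1_def by auto
        with ra rb have "g0 t0 > 0" "g1 t1 > 0" by auto
        then have c: "g ((1-l)*t0 + l*t1) > 0" and
          ci: "g ((1-l)*t0 + l*t1) powr e \<le> (1-l) * g0 t0 powr e + l * g1 t1 powr e"
          using hyp[of t0 t1] unfolding kc_def e_def by auto
        have "(1-l) * g0 t0 powr e + l * g1 t1 powr e < (1-l) * (r*a) powr e + l * (r*b) powr e"
          using p0 p1 ra rb e0 by (intro wstrict l powr_less_mono2_neg) auto
        also have "\<dots> = r powr e * S"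
          unfolding S_def using ra rb A(1) B(1) True by (simp add: powr_mult algebra_simps)
        also have "\<dots> = (r * m) powr e" using True mpos me by (simp add: powr_mult)
        finally have "g ((1-l)*t0 + l*t1) powr e < (r * m) powr e" using ci by linarith
        then have "r * m < g ((1-l)*t0 + l*t1)"
        proof (rule contrapos_pp)
          assume "\<not> r * m < g ((1-l)*t0 + l*t1)"
          then have "g ((1-l)*t0 + l*t1) \<le> r * m" by simp
          then have "(r * m) powr e \<le> g ((1-l)*t0 + l*t1) powr e"
            using c e0 by (intro powr_mono2') auto
          then show "\<not> g ((1-l)*t0 + l*t1) powr e < (r * m) powr e" by simp
        qed
        then show ?thesis unfolding L_def by simp
      qed
      have BM: "(1-l) * measure lborel L0 + l * measure lborel L1 \<le> measure lborel L"
      proof (rule BM1[OF l _ _ _ _ fin0 fin1 finL _ mix])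
        show "L0 \<noteq> {}" unfolding L0_def using A(3)[OF ra(2)] .
        show "L1 \<noteq> {}" unfolding L1_def using B(3)[OF rb(2)] .
        show "convex L0" unfolding L0_def by (rule level_convex[OF qc0])
        show "convex L1" unfolding L1_def by (rule level_convex[OF qc1])
        show "L \<in> sets lborel" unfolding L_def by measurable
      qed auto
      have eF0: "F0 r = ennreal (measure lborel L0)" unfolding F0_def L0_def
        using layer_inner[OF meas(1), of r a] True fin0[unfolded L0_def] by (simp add: emeasure_eq_ennreal_measure)
      have eF1: "F1 r = ennreal (measure lborel L1)" unfolding F1_def L1_def
        using layer_inner[OF meas(2), of r b] True fin1[unfolded L1_def] by (simp add: emeasure_eq_ennreal_measure)
      have eF: "F r = ennreal (measure lborel L)" unfolding F_def L_def
        using layer_inner[OF meas(3), of r m] True finL[unfolded L_def] by (simp add: emeasure_eq_ennreal_measure)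
      show ?thesis unfolding eF0 eF1 eF using BM l
        by (simp add: ennreal_mult[symmetric] ennreal_plus[symmetric] del: ennreal_plus ennreal_leI) 
    qed
    have eqi: "(\<integral>\<^sup>+r. ennreal (1-l) * F0 r + ennreal l * F1 r \<partial>lborel)
        = ennreal (1-l) * (\<integral>\<^sup>+r. F0 r \<partial>lborel) + ennreal l * (\<integral>\<^sup>+r. F1 r \<partial>lborel)"
      by (simp add: nn_integral_add nn_integral_cmult)
    have "(\<integral>\<^sup>+r. ennreal (1-l) * F0 r + ennreal l * F1 r \<partial>lborel) \<le> (\<integral>\<^sup>+r. F r \<partial>lborel)"
      by (intro nn_integral_mono pt)
    then have "ennreal (1-l) * (\<integral>\<^sup>+r. F0 r \<partial>lborel) + ennreal l * (\<integral>\<^sup>+r. F1 r \<partial>lborel) \<le> (\<integral>\<^sup>+r. F r \<partial>lborel)"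
      unfolding eqi .
    then have "ennreal m * (ennreal (1-l) * (\<integral>\<^sup>+r. F0 r \<partial>lborel) + ennreal l * (\<integral>\<^sup>+r. F1 r \<partial>lborel)) \<le> J"
      using Jge by (meson mult_left_mono order_trans zero_le)
    moreover
    have X0: "(\<integral>\<^sup>+r. F0 r \<partial>lborel) = ennreal (enn2real J0 / a)"
    proof -
      have "J0 < \<infinity>" using fin(1) unfolding J0_def .
      then have "ennreal (enn2real J0) = ennreal a * (\<integral>\<^sup>+r. F0 r \<partial>lborel)" using J0eq by simp
      then have "(\<integral>\<^sup>+r. F0 r \<partial>lborel) = ennreal (enn2real J0) / ennreal a"
        using A(1) mult_divide_eq_ennreal[of "ennreal a" "\<integral>\<^sup>+r. F0 r \<partial>lborel"]
        by (simp add: mult.commute)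
      then show ?thesis using A(1) I0 by (simp add: divide_ennreal)
    qed
    moreover
    have X1: "(\<integral>\<^sup>+r. F1 r \<partial>lborel) = ennreal (enn2real J1 / b)"
    proof -
      have "J1 < \<infinity>" using fin(2) unfolding J1_def .
      then have "ennreal (enn2real J1) = ennreal b * (\<integral>\<^sup>+r. F1 r \<partial>lborel)" using J1eq by simp
      then have "(\<integral>\<^sup>+r. F1 r \<partial>lborel) = ennreal (enn2real J1) / ennreal b"
        using B(1) mult_divide_eq_ennreal[of "ennreal b" "\<integral>\<^sup>+r. F1 r \<partial>lborel"]
        by (simp add: mult.commute)
      then show ?thesis using B(1) I1 by (simp add: divide_ennreal)
    qed
    ultimately have "ennreal (m * ((1-l) * (enn2real J0 / a) + l * (enn2real J1 / b))) \<le> J"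
      using l A(1) B(1) mpos I0 I1
      by (simp add: ennreal_mult[symmetric] ennreal_plus[symmetric] del: ennreal_plus)
    also have "J = ennreal (enn2real J)" using fin(3) unfolding J_def by simp
    finally have H: "m * ((1-l) * (enn2real J0 / a) + l * (enn2real J1 / b)) \<le> enn2real J"
      by (subst (asm) ennreal_le_iff) auto
    have "kc k l (enn2real J0) (enn2real J1) (enn2real J)"
      using alg_holder[OF l A(1) B(1) I0 I1, of k "enn2real J"] H
      unfolding m_def S_def e_def by simp
  }
  then show ?thesis unfolding J0_def[symmetric] J1_def[symmetric] J_def[symmetric]
    by (auto simp: kc_def)
qed

definition mixf :: "real \<Rightarrow> ('i \<Rightarrow> real) \<Rightarrow> ('i \<Rightarrow> real) \<Rightarrow> ('i \<Rightarrow> real)" where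
  "mixf l x0 x1 = (\<lambda>i. (1-l) * x0 i + l * x1 i)"

lemma mixf_upd: "mixf l (x0(i := t0)) (x1(i := t1)) = (mixf l x0 x1)(i := (1-l)*t0 + l*t1)"
  by (auto simp: mixf_def fun_eq_iff)

lemma mixf_same: "mixf l x x = x"
  by (auto simp: mixf_def fun_eq_iff algebra_simps)

lemma mixf_space:
  assumes "x0 \<in> space (PiM I M)" "x1 \<in> space (PiM I M)" "\<And>i. space (M i) = UNIV"
  shows "mixf l x0 x1 \<in> space (PiM I M)"
  using assms by (auto simp: space_PiM PiE_def extensional_def mixf_def algebra_simps)

lemma mix_same_vec: "(1-l) *\<^sub>R y + l *\<^sub>R y = (y :: 'y::real_vector)"
  by (simp add: algebra_simps)

lemma bound_integral:
  fixes \<rho> :: "real \<Rightarrow> real" and I :: "'i set"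
  assumes "finite I" and \<rho>: "\<And>t. 0 \<le> \<rho> t" "\<rho> \<in> borel_measurable lborel"
  shows "(\<integral>\<^sup>+x. ennreal (\<Prod>i\<in>I. \<rho> (x i)) \<partial>PiM I (\<lambda>_. lborel))
        = (\<integral>\<^sup>+t. ennreal (\<rho> t) \<partial>lborel) ^ card I"
proof -
  interpret product_sigma_finite "\<lambda>_::'i. lborel" by standard
  have "(\<integral>\<^sup>+x. ennreal (\<Prod>i\<in>I. \<rho> (x i)) \<partial>PiM I (\<lambda>_. lborel))
      = (\<integral>\<^sup>+x. (\<Prod>i\<in>I. ennreal (\<rho> (x i))) \<partial>PiM I (\<lambda>_. lborel))"
    using \<rho> by (intro nn_integral_cong) (simp add: prod_ennreal)
  also have "\<dots> = (\<Prod>i\<in>I. (\<integral>\<^sup>+t. ennreal (\<rho> t) \<partial>lborel))"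
    using assms by (intro product_nn_integral_prod) auto
  finally show ?thesis by simp
qed

abbreviation "PL I \<equiv> PiM I (\<lambda>_. lborel :: real measure)"

lemma LN:
  fixes \<rho> :: "real \<Rightarrow> real" and I :: "'i set" and G :: "'y::real_vector \<Rightarrow> ('i \<Rightarrow> real) \<Rightarrow> real"
  assumes fI: "finite I"
    and \<rho>: "\<And>t. 0 \<le> \<rho> t" "\<And>t. \<rho> t \<le> 1" "\<rho> \<in> borel_measurable lborel"
       "(\<integral>\<^sup>+t. ennreal (\<rho> t) \<partial>lborel) < \<infinity>"
    and nn: "\<And>y x. 0 \<le> G y x"
    and meas: "\<And>y. G y \<in> borel_measurable (PL I)"
    and bd: "\<And>y. \<exists>C\<ge>0. \<forall>x\<in>space (PL I). G y x \<le> C * (\<Prod>i\<in>I. \<rho> (x i))"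
    and cc: "\<And>y0 y1 x0 x1 l. 0 \<le> l \<Longrightarrow> l \<le> 1 \<Longrightarrow> x0 \<in> space (PL I) \<Longrightarrow> x1 \<in> space (PL I) \<Longrightarrow>
        kc (j + card I) l (G y0 x0) (G y1 x1) (G ((1-l) *\<^sub>R y0 + l *\<^sub>R y1) (mixf l x0 x1))"
    and l: "0 \<le> l" "l \<le> 1"
  shows "kc j l (enn2real (\<integral>\<^sup>+x. ennreal (G y0 x) \<partial>PL I)) (enn2real (\<integral>\<^sup>+x. ennreal (G y1 x) \<partial>PL I))
           (enn2real (\<integral>\<^sup>+x. ennreal (G ((1-l) *\<^sub>R y0 + l *\<^sub>R y1) x) \<partial>PL I))"
  using fI nn meas bd cc
proof (induction I arbitrary: G j rule: finite_induct)
  case empty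
  have sp: "space (PL {}) = {\<lambda>_. undefined}" by (simp add: PiM_empty)
  have int: "(\<integral>\<^sup>+x. ennreal (G y x) \<partial>PL {}) = ennreal (G y (\<lambda>_. undefined))" for y
    by (simp add: PiM_empty nn_integral_count_space_finite)
  have mu: "mixf l (\<lambda>_. undefined) (\<lambda>_. undefined) = (\<lambda>_. undefined)" by (rule mixf_same)
  show ?case
    using empty.prems(4)[of l "\<lambda>_. undefined" "\<lambda>_. undefined" y0 y1] l sp empty.prems(1)
    unfolding int mu by simp
next
  case (insert i I)
  interpret product_sigma_finite "\<lambda>_::'i. lborel :: real measure" by standard
  note ins = insert.prems
  define H where "H = (\<lambda>y x. enn2real (\<integral>\<^sup>+t. ennreal (G y (x(i := t))) \<partial>lborel))"
  define K where "K = enn2real (\<integral>\<^sup>+t. ennreal (\<rho> t) \<partial>lborel)"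
  have K0: "K \<ge> 0" unfolding K_def by simp
  have Keq: "(\<integral>\<^sup>+t. ennreal (\<rho> t) \<partial>lborel) = ennreal K" unfolding K_def using \<rho>(4) by simp
  have updsp: "x(i := t) \<in> space (PL (insert i I))" if "x \<in> space (PL I)" for x t
    using that insert.hyps by (auto simp: space_PiM PiE_def extensional_def)
  have prodeq: "(\<Prod>j\<in>insert i I. \<rho> ((x(i := t)) j)) = \<rho> t * (\<Prod>j\<in>I. \<rho> (x j))" for x t
  proof -
    have "(\<Prod>j\<in>I. \<rho> ((x(i := t)) j)) = (\<Prod>j\<in>I. \<rho> (x j))"
      using insert.hyps by (intro prod.cong) auto
    then show ?thesis using insert.hyps by simp
  qed
  have inner_bd: "(\<integral>\<^sup>+t. ennreal (G y (x(i := t))) \<partial>lborel) \<le> ennreal (C * (\<Prod>j\<in>I. \<rho> (x j))) * ennreal K"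
    if "x \<in> space (PL I)" "C \<ge> 0" "\<forall>x\<in>space (PL (insert i I)). G y x \<le> C * (\<Prod>i\<in>insert i I. \<rho> (x i))" for y x C
  proof -
    have "(\<integral>\<^sup>+t. ennreal (G y (x(i := t))) \<partial>lborel) \<le> (\<integral>\<^sup>+t. ennreal (C * (\<Prod>j\<in>I. \<rho> (x j))) * ennreal (\<rho> t) \<partial>lborel)"
    proof (intro nn_integral_mono)
      fix t
      have "G y (x(i := t)) \<le> C * (\<rho> t * (\<Prod>j\<in>I. \<rho> (x j)))"
        using that(3) updsp[OF that(1)] prodeq by metis
      then have "G y (x(i := t)) \<le> (C * (\<Prod>j\<in>I. \<rho> (x j))) * \<rho> t" by (simp add: mult_ac)
      moreover have "ennreal (C * (\<Prod>j\<in>I. \<rho> (x j))) * ennreal (\<rho> t) = ennreal ((C * (\<Prod>j\<in>I. \<rho> (x j))) * \<rho> t)"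
        using that \<rho>(1) by (simp add: ennreal_mult prod_nonneg)
      ultimately show "ennreal (G y (x(i := t))) \<le> ennreal (C * (\<Prod>j\<in>I. \<rho> (x j))) * ennreal (\<rho> t)"
        by (simp add: ennreal_leI)
    qed
    also have "\<dots> = ennreal (C * (\<Prod>j\<in>I. \<rho> (x j))) * ennreal K"
      using \<rho>(3) Keq by (simp add: nn_integral_cmult)
    finally show ?thesis .
  qed
  have Gm[measurable]: "G y \<in> borel_measurable (PL (insert i I))" for y using ins(2) .
  have inner_fin: "(\<integral>\<^sup>+t. ennreal (G y (x(i := t))) \<partial>lborel) < \<infinity>" if "x \<in> space (PL I)" for y x
  proof -
    obtain C where C: "C \<ge> 0" "\<forall>x\<in>space (PL (insert i I)). G y x \<le> C * (\<Prod>i\<in>insert i I. \<rho> (x i))"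
      using ins(3)[of y] by blast
    show ?thesis using inner_bd[OF that C(1) C(2)] by (simp add: le_less_trans ennreal_mult_less_top)
  qed
  have Hinner: "ennreal (H y x) = (\<integral>\<^sup>+t. ennreal (G y (x(i := t))) \<partial>lborel)" if "x \<in> space (PL I)" for y x
    unfolding H_def using inner_fin[OF that] by simp
  have Hnn: "0 \<le> H y x" for y x unfolding H_def by simp
  have Hmeas: "H y \<in> borel_measurable (PL I)" for y
  proof -
    have "(\<lambda>(x, t). ennreal (G y (x(i := t)))) \<in> borel_measurable (PL I \<Otimes>\<^sub>M lborel)"
      using measurable_add_dim[of i I "\<lambda>_. lborel :: real measure"] by measurable
    then have "(\<lambda>x. \<integral>\<^sup>+t. ennreal (G y (x(i := t))) \<partial>lborel) \<in> borel_measurable (PL I)"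
      by (rule lborel.borel_measurable_nn_integral)
    then show ?thesis unfolding H_def by measurable
  qed
  have Heq: "(\<integral>\<^sup>+x. ennreal (G y x) \<partial>PL (insert i I)) = (\<integral>\<^sup>+x. ennreal (H y x) \<partial>PL I)" for y
  proof -
    have "(\<integral>\<^sup>+x. ennreal (G y x) \<partial>PL (insert i I)) = (\<integral>\<^sup>+x. (\<integral>\<^sup>+t. ennreal (G y (x(i := t))) \<partial>lborel) \<partial>PL I)"
      using insert.hyps by (intro product_nn_integral_insert) auto
    also have "\<dots> = (\<integral>\<^sup>+x. ennreal (H y x) \<partial>PL I)"
      by (intro nn_integral_cong) (simp add: Hinner)
    finally show ?thesis .
  qed
  have Hbd: "\<exists>C\<ge>0. \<forall>x\<in>space (PL I). H y x \<le> C * (\<Prod>i\<in>I. \<rho> (x i))" for y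
  proof -
    obtain C where C: "C \<ge> 0" "\<forall>x\<in>space (PL (insert i I)). G y x \<le> C * (\<Prod>i\<in>insert i I. \<rho> (x i))"
      using ins(3)[of y] by blast
    have "H y x \<le> (C * K) * (\<Prod>i\<in>I. \<rho> (x i))" if "x \<in> space (PL I)" for x
    proof -
      have "ennreal (H y x) \<le> ennreal (C * (\<Prod>j\<in>I. \<rho> (x j))) * ennreal K"
        using Hinner[OF that] inner_bd[OF that C(1) C(2)] by simp
      also have "\<dots> = ennreal ((C * K) * (\<Prod>j\<in>I. \<rho> (x j)))"
        using C(1) K0 \<rho>(1) by (simp add: ennreal_mult prod_nonneg mult_ac)
      finally show ?thesis using C(1) K0 \<rho>(1) by (simp add: ennreal_le_iff prod_nonneg)
    qed
    then show ?thesis using C(1) K0 by (intro exI[of _ "C * K"]) auto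
  qed
  have Hcc: "kc (j + card I) l' (H y0' x0) (H y1' x1) (H ((1-l') *\<^sub>R y0' + l' *\<^sub>R y1') (mixf l' x0 x1))"
    if l': "0 \<le> l'" "l' \<le> 1" and xs: "x0 \<in> space (PL I)" "x1 \<in> space (PL I)" for y0' y1' x0 x1 l'
  proof -
    define ym where "ym = (1-l') *\<^sub>R y0' + l' *\<^sub>R y1'"
    define xm where "xm = mixf l' x0 x1"
    have xm: "xm \<in> space (PL I)" unfolding xm_def using xs by (intro mixf_space) auto
    have gm: "(\<lambda>t. G y (x(i := t))) \<in> borel_measurable lborel" if "x \<in> space (PL I)" for y x
      using measurable_compose[OF measurable_component_update[OF that insert.hyps(2)] Gm[of y]] by simp
    have gbd: "\<exists>B. \<forall>t. G y (x(i := t)) \<le> B" if "x \<in> space (PL I)" for y x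
    proof -
      obtain C where C: "C \<ge> 0" "\<forall>x\<in>space (PL (insert i I)). G y x \<le> C * (\<Prod>i\<in>insert i I. \<rho> (x i))"
        using ins(3)[of y] by blast
      have "G y (x(i := t)) \<le> C * (\<Prod>j\<in>I. \<rho> (x j))" for t
      proof -
        have "G y (x(i := t)) \<le> C * (\<rho> t * (\<Prod>j\<in>I. \<rho> (x j)))"
          using C(2) updsp[OF that] prodeq by metis
        also have "\<dots> \<le> C * (1 * (\<Prod>j\<in>I. \<rho> (x j)))"
          using C(1) \<rho>(1,2) by (intro mult_left_mono mult_right_mono) (auto simp: prod_nonneg)
        finally show ?thesis by simp
      qed
      then show ?thesis by blast
    qed
    have qc: "min (G y (x(i := t))) (G y (x(i := t'))) \<le> G y (x(i := (1-u)*t + u*t'))"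
      if "x \<in> space (PL I)" "0 \<le> u" "u \<le> 1" for y x t t' u
    proof -
      have "kc (j + card (insert i I)) u (G y (x(i := t))) (G y (x(i := t'))) (G ((1-u) *\<^sub>R y + u *\<^sub>R y) (mixf u (x(i := t)) (x(i := t'))))"
        using ins(4)[OF that(2,3) updsp[OF that(1)] updsp[OF that(1)]] .
      then have "kc (j + card (insert i I)) u (G y (x(i := t))) (G y (x(i := t'))) (G y (x(i := (1-u)*t + u*t')))"
        unfolding mixf_upd mixf_same mix_same_vec .
      then show ?thesis using that ins(1) by (intro kc_min) auto
    qed
    obtain B0 where B0: "\<And>t. G y0' (x0(i := t)) \<le> B0" using gbd[OF xs(1)] by blast
    obtain B1 where B1: "\<And>t. G y1' (x1(i := t)) \<le> B1" using gbd[OF xs(2)] by blast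
    have hyp: "kc (Suc (j + card I)) l' (G y0' (x0(i := t0))) (G y1' (x1(i := t1))) (G ym (xm(i := (1-l')*t0 + l'*t1)))" for t0 t1
    proof -
      have c: "card (insert i I) = Suc (card I)" using insert.hyps by simp
      have "kc (j + card (insert i I)) l' (G y0' (x0(i:=t0))) (G y1' (x1(i:=t1)))
          (G ((1-l') *\<^sub>R y0' + l' *\<^sub>R y1') (mixf l' (x0(i:=t0)) (x1(i:=t1))))"
        by (rule ins(4)[OF l' updsp[OF xs(1)] updsp[OF xs(2)]])
      then show ?thesis unfolding mixf_upd c ym_def xm_def by (simp only: add_Suc_right)
    qed
    have "kc (j + card I) l' (enn2real (\<integral>\<^sup>+t. ennreal (G y0' (x0(i := t))) \<partial>lborel))
        (enn2real (\<integral>\<^sup>+t. ennreal (G y1' (x1(i := t))) \<partial>lborel))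
        (enn2real (\<integral>\<^sup>+t. ennreal (G ym (xm(i := t))) \<partial>lborel))"
      by (rule L1[OF l' ins(1) ins(1) ins(1) gm[OF xs(1)] gm[OF xs(2)] gm[OF xm] B0 B1
           inner_fin[OF xs(1)] inner_fin[OF xs(2)] inner_fin[OF xm]
           qc[OF xs(1)] qc[OF xs(2)] hyp])
    then show ?thesis unfolding H_def ym_def xm_def .
  qed
  show ?case
    using insert.IH[of H j, OF Hnn Hmeas Hbd Hcc] unfolding Heq by simp
qed

lemma phi_deriv_mono:
  fixes p n x y :: real
  assumes p: "p \<ge> n" and n: "n \<ge> 1" and xy: "0 < x" "x \<le> y"
  shows "(1/n) * (1 + x powr p) powr (1/n - 1) * (p * x powr (p - 1))
       \<le> (1/n) * (1 + y powr p) powr (1/n - 1) * (p * y powr (p - 1))"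
proof -
  define beta where "beta = 1 - 1/n"
  have b0: "beta \<ge> 0" "beta < 1" using n unfolding beta_def by auto
  have ex: "p/n - 1 \<ge> 0" using p n by (simp add: field_simps)
  have id: "(1/n) * (1 + t powr p) powr (1/n - 1) * (p * t powr (p - 1))
      = (p/n) * (t powr (p/n - 1) * (t powr p / (1 + t powr p)) powr beta)" if t: "t > 0" for t
  proof -
    have pos: "1 + t powr p > 0" using t by (smt (verit) powr_ge_zero)
    have "(t powr p / (1 + t powr p)) powr beta = t powr (p * beta) / (1 + t powr p) powr beta"
      using t pos by (simp add: powr_divide powr_powr)
    moreover have "(1 + t powr p) powr (1/n - 1) = 1 / (1 + t powr p) powr beta"
      using pos unfolding beta_def by (simp add: powr_minus_divide[symmetric])
    moreover have "t powr (p - 1) = t powr (p/n - 1) * t powr (p * beta)"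
      using t unfolding beta_def by (simp add: powr_add[symmetric] algebra_simps)
    ultimately show ?thesis by (simp add: field_simps)
  qed
  have m1: "x powr (p/n - 1) \<le> y powr (p/n - 1)" using xy ex by (intro powr_mono2) auto
  have fr: "x powr p / (1 + x powr p) \<le> y powr p / (1 + y powr p)"
  proof -
    have "x powr p \<le> y powr p" using xy p n by (intro powr_mono2) auto
    moreover have "t powr p / (1 + t powr p) = 1 - 1 / (1 + t powr p)" if "t > 0" for t
      using that by (smt (verit) add_divide_distrib divide_self_if powr_ge_zero)
    ultimately show ?thesis using xy
      by (smt (verit, best) divide_left_mono frac_le powr_ge_zero)
  qed
  have m2: "(x powr p / (1 + x powr p)) powr beta \<le> (y powr p / (1 + y powr p)) powr beta"
    using fr b0 xy by (intro powr_mono2) (auto simp: divide_nonneg_pos)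
  have "x powr (p/n - 1) * (x powr p / (1 + x powr p)) powr beta \<le> y powr (p/n - 1) * (y powr p / (1 + y powr p)) powr beta"
    using m1 m2 by (intro mult_mono) auto
  then have "(p/n) * (x powr (p/n - 1) * (x powr p / (1 + x powr p)) powr beta) \<le> (p/n) * (y powr (p/n - 1) * (y powr p / (1 + y powr p)) powr beta)"
    using p n by (intro mult_left_mono) auto
  moreover have "y > 0" using xy by simp
  ultimately show ?thesis unfolding id[OF xy(1)] id[OF \<open>y > 0\<close>] by blast
qed

lemma phi_convex_pos:
  fixes p n :: real
  assumes p: "p \<ge> n" and n: "n \<ge> 1"
  shows "convex_on {0<..} (\<lambda>t. (1 + t powr p) powr (1/n))"
proof (rule convex_on_realI[where f' = "\<lambda>t. (1/n) * (1 + t powr p) powr (1/n - 1) * (p * t powr (p - 1))"])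
  show "connected {0::real<..}" by simp
  fix x :: real assume x: "x \<in> {0<..}"
  have pos: "1 + x powr p > 0" using x by (smt (verit) powr_ge_zero)
  show "((\<lambda>t. (1 + t powr p) powr (1/n)) has_real_derivative
      (1/n) * (1 + x powr p) powr (1/n - 1) * (p * x powr (p - 1))) (at x)"
    using x pos by (auto intro!: derivative_eq_intros)
next
  fix x y :: real assume "x \<in> {0<..}" "y \<in> {0<..}" "x \<le> y"
  then show "(1/n) * (1 + x powr p) powr (1/n - 1) * (p * x powr (p - 1))
       \<le> (1/n) * (1 + y powr p) powr (1/n - 1) * (p * y powr (p - 1))"
    using phi_deriv_mono[OF p n] by auto
qed

lemma phi_cont:
  fixes p n :: real
  assumes "p > 0"
  shows "continuous_on {0..} (\<lambda>t. (1 + t powr p) powr (1/n))"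
proof -
  have "continuous_on {0..} (\<lambda>t::real. t powr p)"
    using assms by (intro continuous_on_powr') (auto intro: continuous_intros)
  then have c: "continuous_on {0..} (\<lambda>t::real. 1 + t powr p)"
    using continuous_on_add[OF continuous_on_const] by blast
  show ?thesis
  proof (rule continuous_on_powr'[OF c continuous_on_const], intro ballI conjI impI)
    fix t :: real assume "t \<in> {0..}"
    have "t powr p \<ge> 0" by simp
    then show "0 \<le> 1 + t powr p" by simp
    assume "1 + t powr p = 0" with \<open>t powr p \<ge> 0\<close> show "0 < 1/n" by linarith
  qed
qed

lemma phi_convex:
  fixes p n a b l :: real
  assumes p: "p \<ge> n" and n: "n \<ge> 1" and ab: "a \<ge> 0" "b \<ge> 0" and l: "0 \<le> l" "l \<le> 1"
  shows "(1 + ((1-l)*a + l*b) powr p) powr (1/n) \<le> (1-l) * (1 + a powr p) powr (1/n) + l * (1 + b powr p) powr (1/n)"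
proof -
  define \<phi> where "\<phi> = (\<lambda>t::real. (1 + t powr p) powr (1/n))"
  have cont: "continuous_on {0..} \<phi>" unfolding \<phi>_def using p n by (intro phi_cont) auto
  define e where "e = (\<lambda>k::nat. 1 / real (Suc k))"
  have e0: "e \<longlonglongrightarrow> 0" unfolding e_def by (rule LIMSEQ_Suc[OF lim_const_over_n])
  have epos: "e k > 0" for k unfolding e_def by simp
  have ineq: "\<phi> ((1-l)*(a + e k) + l*(b + e k)) \<le> (1-l) * \<phi> (a + e k) + l * \<phi> (b + e k)" for k
    using convex_onD[OF phi_convex_pos[OF p n], of l "a + e k" "b + e k"] ab l epos[of k]
    unfolding \<phi>_def by (simp add: add_pos_nonneg add_nonneg_pos)
  have lim: "(\<lambda>k. \<phi> (c + e k)) \<longlonglongrightarrow> \<phi> c" if "c \<ge> 0" for c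
  proof -
    have "(\<lambda>k. c + e k) \<longlonglongrightarrow> c" using tendsto_add[OF tendsto_const e0, of c] by simp
    moreover have "\<forall>\<^sub>F k in sequentially. c + e k \<in> {0..}" using that epos by (intro always_eventually allI) (simp add: add_nonneg_nonneg less_imp_le)
    ultimately show ?thesis
      using continuous_on_tendsto_compose[OF cont, of "\<lambda>k. c + e k" c sequentially] that by simp
  qed
  have "(\<lambda>k. \<phi> ((1-l)*a + l*b + e k)) \<longlonglongrightarrow> \<phi> ((1-l)*a + l*b)"
    using ab l by (intro lim) auto
  moreover have "(\<lambda>k. (1-l) * \<phi> (a + e k) + l * \<phi> (b + e k)) \<longlonglongrightarrow> (1-l) * \<phi> a + l * \<phi> b"
    using ab by (intro tendsto_intros lim)
  moreover have "(1-l)*(a + e k) + l*(b + e k) = (1-l)*a + l*b + e k" for k by (simp add: algebra_simps)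
  ultimately have "\<phi> ((1-l)*a + l*b) \<le> (1-l) * \<phi> a + l * \<phi> b"
    using ineq by (intro LIMSEQ_le) auto
  then show ?thesis unfolding \<phi>_def .
qed

context
  fixes Nn :: "'a::euclidean_space \<Rightarrow> real"
  assumes an: "aniso_norm Nn"
begin

lemma Nn_conv: "Nn ((1-l) *\<^sub>R x + l *\<^sub>R y) \<le> (1-l) * Nn x + l * Nn y" if "0 \<le> l" "l \<le> 1"
  using an that unfolding aniso_norm_def by (auto intro: convex_onD)

lemma Nn_hom: "c \<ge> 0 \<Longrightarrow> Nn (c *\<^sub>R x) = c * Nn x"
  using an unfolding aniso_norm_def by auto

lemma Nn_lower: "\<exists>cl>0. \<forall>x. cl * norm x \<le> Nn x"
  using an unfolding aniso_norm_def by (meson order.trans)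

lemma Nn_nn: "Nn x \<ge> 0"
proof -
  obtain cl where "cl > 0" "\<forall>x. cl * norm x \<le> Nn x" using Nn_lower by blast
  then show ?thesis by (smt (verit) mult_nonneg_nonneg norm_ge_zero)
qed

lemma Nn_cont: "continuous_on UNIV Nn"
  using an unfolding aniso_norm_def by (intro convex_on_continuous) auto

lemma Nn_meas: "Nn \<in> borel_measurable borel"
  using Nn_cont by (rule borel_measurable_continuous_onI)

end

lemma Ph_formula:
  fixes Nn :: "'a::euclidean_space \<Rightarrow> real" and s h :: real
  assumes an: "aniso_norm Nn"
  defines "c0 \<equiv> sigma_h s h powr (- real DIM('a) / s)"
    and "c1 \<equiv> 1 / sigma_h s h powr (1 / s)"
  shows "kerPh Nn s h z = c0 / (1 + (c1 * Nn z) powr (real DIM('a) + s))"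
proof -
  have "c1 \<ge> 0" unfolding c1_def sigma_h_def by simp
  then show ?thesis unfolding kerPh_def kerP_def c0_def c1_def
    using Nn_hom[OF an] by simp
qed

lemma Ph_props:
  fixes Nn :: "'a::euclidean_space \<Rightarrow> real"
  assumes an: "aniso_norm Nn" and s: "0 < s" "s < 1" and h: "0 < h"
  shows "\<And>z. kerPh Nn s h z > 0"
    and "\<And>z0 z1 l. 0 \<le> l \<Longrightarrow> l \<le> 1 \<Longrightarrow> kerPh Nn s h ((1-l) *\<^sub>R z0 + l *\<^sub>R z1) powr (-1 / real DIM('a))
          \<le> (1-l) * kerPh Nn s h z0 powr (-1 / real DIM('a)) + l * kerPh Nn s h z1 powr (-1 / real DIM('a))"
    and "kerPh Nn s h \<in> borel_measurable borel"
proof -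
  define N where "N = real DIM('a)"
  have N1: "N \<ge> 1" unfolding N_def by (simp add: DIM_positive Suc_le_eq)
  define c0 where "c0 = sigma_h s h powr (- real DIM('a) / s)"
  define c1 where "c1 = 1 / sigma_h s h powr (1 / s)"
  have sig: "sigma_h s h > 0" unfolding sigma_h_def using h by simp
  have c0: "c0 > 0" unfolding c0_def using sig by simp
  have c1: "c1 > 0" unfolding c1_def using sig by simp
  define pp where "pp = N + s"
  have F: "kerPh Nn s h z = c0 / (1 + (c1 * Nn z) powr pp)" for z
    unfolding c0_def c1_def pp_def N_def by (rule Ph_formula[OF an])
  have den: "1 + (c1 * Nn z) powr pp > 0" for z by (smt (verit) powr_ge_zero)
  show pos: "kerPh Nn s h z > 0" for z unfolding F using c0 den[of z] by simp
  have pw: "kerPh Nn s h z powr (-1/N) = c0 powr (-1/N) * (1 + (c1 * Nn z) powr pp) powr (1/N)" for z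
  proof -
    have "kerPh Nn s h z powr (-1/N) = c0 powr (-1/N) / (1 + (c1 * Nn z) powr pp) powr (-1/N)"
      unfolding F using c0 den[of z] by (simp add: powr_divide)
    also have "\<dots> = c0 powr (-1/N) * (1 + (c1 * Nn z) powr pp) powr (1/N)"
      using den[of z] by (simp add: powr_minus_divide[symmetric] powr_minus divide_inverse)
    finally show ?thesis .
  qed
  show "kerPh Nn s h ((1-l) *\<^sub>R z0 + l *\<^sub>R z1) powr (-1 / real DIM('a))
          \<le> (1-l) * kerPh Nn s h z0 powr (-1 / real DIM('a)) + l * kerPh Nn s h z1 powr (-1 / real DIM('a))"
    if l: "0 \<le> l" "l \<le> 1" for z0 z1 l
  proof -
    define zm where "zm = (1-l) *\<^sub>R z0 + l *\<^sub>R z1"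
    have "c1 * Nn zm \<le> (1-l) * (c1 * Nn z0) + l * (c1 * Nn z1)"
      using Nn_conv[OF an l, of z0 z1] c1 unfolding zm_def
      by (smt (verit) mult_left_mono distrib_left mult.left_commute)
    then have "(1 + (c1 * Nn zm) powr pp) powr (1/N) \<le> (1 + ((1-l) * (c1 * Nn z0) + l * (c1 * Nn z1)) powr pp) powr (1/N)"
      using c1 Nn_nn[OF an] N1 s unfolding pp_def
      by (intro powr_mono2 add_left_mono) (auto intro: add_nonneg_nonneg)
    also have "\<dots> \<le> (1-l) * (1 + (c1 * Nn z0) powr pp) powr (1/N) + l * (1 + (c1 * Nn z1) powr pp) powr (1/N)"
      using c1 Nn_nn[OF an] N1 s l unfolding pp_def by (intro phi_convex) auto
    finally have "c0 powr (-1/N) * (1 + (c1 * Nn zm) powr pp) powr (1/N) \<le>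
        c0 powr (-1/N) * ((1-l) * (1 + (c1 * Nn z0) powr pp) powr (1/N) + l * (1 + (c1 * Nn z1) powr pp) powr (1/N))"
      by (intro mult_left_mono) auto
    then show ?thesis unfolding N_def[symmetric] zm_def[symmetric] pw by (simp add: algebra_simps)
  qed
  show "kerPh Nn s h \<in> borel_measurable borel"
  proof -
    have "(\<lambda>z. c0 / (1 + (c1 * Nn z) powr pp)) \<in> borel_measurable borel"
      using Nn_meas[OF an] by measurable
    then show ?thesis unfolding F[abs_def] .
  qed
qed

lemma tail_integral:
  fixes q :: real assumes q: "q > 1"
  shows "(\<integral>\<^sup>+t. ennreal (indicator {1..} t * t powr (-q)) \<partial>lborel) < \<infinity>"
proof -
  have "((\<lambda>x. x powr (-q)) has_integral -(1 powr (-q+1)) / (-q+1)) {1..}"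
    using q by (intro has_integral_powr_to_inf) auto
  then have "(\<integral>\<^sup>+t. ennreal (t powr (-q)) * indicator {1..} t \<partial>lborel) = ennreal (-(1 powr (-q+1)) / (-q+1))"
    by (intro nn_integral_has_integral_lebesgue') auto
  moreover have "(\<integral>\<^sup>+t. ennreal (indicator {1..} t * t powr (-q)) \<partial>lborel) = (\<integral>\<^sup>+t. ennreal (t powr (-q)) * indicator {1..} t \<partial>lborel)"
    by (intro nn_integral_cong) (auto simp: indicator_def)
  ultimately show ?thesis by simp
qed

lemma rho_props:
  fixes q :: real assumes q: "q > 1"
  defines "\<rho> \<equiv> (\<lambda>t::real. (max 1 \<bar>t\<bar>) powr (-q))"
  shows "\<And>t. 0 \<le> \<rho> t" "\<And>t. \<rho> t \<le> 1" "\<rho> \<in> borel_measurable lborel"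
    "(\<integral>\<^sup>+t. ennreal (\<rho> t) \<partial>lborel) < \<infinity>"
proof -
  show "0 \<le> \<rho> t" for t unfolding \<rho>_def by simp
  show "\<rho> t \<le> 1" for t
  proof -
    have "(max 1 \<bar>t\<bar>) powr (-q) \<le> (max 1 \<bar>t\<bar>) powr 0" using q by (intro powr_mono) auto
    moreover have "max 1 \<bar>t\<bar> \<noteq> 0" by linarith
    ultimately show ?thesis unfolding \<rho>_def by simp
  qed
  show "\<rho> \<in> borel_measurable lborel" unfolding \<rho>_def by measurable
  define f where "f = (\<lambda>t::real. indicator {1..} t * t powr (-q))"
  have fm[measurable]: "f \<in> borel_measurable borel" unfolding f_def by measurable
  have le: "ennreal (\<rho> t) \<le> indicator {-1..1} t + ennreal (f t) + ennreal (f (0 + (-1) * t))" for t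
  proof (cases "\<bar>t\<bar> \<le> 1")
    case True
    then have "\<rho> t = 1" unfolding \<rho>_def by simp
    moreover have "indicator {-1..1} t = (1::ennreal)" using True by (auto simp: indicator_def abs_le_iff)
    moreover have "(1::ennreal) \<le> 1 + ennreal (f t) + ennreal (f (0 + (-1) * t))"
      by (simp add: add.assoc add_increasing2)
    ultimately show ?thesis by simp
  next
    case False
    show ?thesis
    proof (cases "t > 1")
      case True then have "\<rho> t = f t" unfolding \<rho>_def f_def by simp
      then show ?thesis by simp
    next
      case False2: False
      with False have "t < -1" by simp
      then have "\<rho> t = f (0 + (-1) * t)" unfolding \<rho>_def f_def by simp
      then show ?thesis by simp
    qed
  qed
  have "(\<integral>\<^sup>+t. ennreal (\<rho> t) \<partial>lborel) \<le> (\<integral>\<^sup>+t. indicator {-1..1} t + ennreal (f t) + ennreal (f (0 + (-1) * t)) \<partial>lborel)"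
    by (intro nn_integral_mono le)
  also have "\<dots> = (\<integral>\<^sup>+t. indicator {-1..1::real} t \<partial>lborel) + (\<integral>\<^sup>+t. ennreal (f t) \<partial>lborel) + (\<integral>\<^sup>+t. ennreal (f (0 + (-1) * t)) \<partial>lborel)"
  proof -
    have "(\<integral>\<^sup>+t. indicator {-1..1} t + ennreal (f t) + ennreal (f (0 + (-1) * t)) \<partial>lborel)
       = (\<integral>\<^sup>+t. indicator {-1..1} t + ennreal (f t) \<partial>lborel) + (\<integral>\<^sup>+t. ennreal (f (0 + (-1) * t)) \<partial>lborel)"
      by (rule nn_integral_add; measurable)
    moreover have "(\<integral>\<^sup>+t. indicator {-1..1} t + ennreal (f t) \<partial>lborel)
       = (\<integral>\<^sup>+t. indicator {-1..1::real} t \<partial>lborel) + (\<integral>\<^sup>+t. ennreal (f t) \<partial>lborel)"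
    proof (rule nn_integral_add)
      show "(\<lambda>t. indicator {-1..1::real} t :: ennreal) \<in> borel_measurable lborel" by simp
    qed measurable
    ultimately show ?thesis by simp
  qed
  also have "(\<integral>\<^sup>+t. ennreal (f (0 + (-1) * t)) \<partial>lborel) = (\<integral>\<^sup>+t. ennreal (f t) \<partial>lborel)"
    using nn_integral_real_affine[of "\<lambda>t. ennreal (f t)" "-1" 0] by simp
  also have "(\<integral>\<^sup>+t. indicator {-1..1::real} t \<partial>lborel) = 2" by simp
  also have "2 + (\<integral>\<^sup>+t. ennreal (f t) \<partial>lborel) + (\<integral>\<^sup>+t. ennreal (f t) \<partial>lborel) < \<infinity>"
    using tail_integral[OF q] unfolding f_def by simp
  finally show "(\<integral>\<^sup>+t. ennreal (\<rho> t) \<partial>lborel) < \<infinity>" .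
qed

lemma scalar_bound:
  fixes r k pp :: real
  assumes r: "r \<ge> 0" and k: "k > 0" and pp: "pp > 0"
  shows "1 / (1 + (k * r) powr pp) \<le> max 1 (k powr (-pp)) * (max 1 r) powr (-pp)"
proof -
  define M where "M = max 1 (k powr (-pp))"
  have M1: "M \<ge> 1" unfolding M_def by simp
  have a: "(max 1 r) powr pp \<le> 1 + r powr pp"
    by (cases "r \<le> 1") (auto simp: max_def)
  have "r powr pp = k powr (-pp) * (k * r) powr pp"
    using k r by (simp add: powr_mult powr_minus field_simps)
  also have "\<dots> \<le> M * (k * r) powr pp" unfolding M_def by (intro mult_right_mono) auto
  finally have b: "1 + r powr pp \<le> M * (1 + (k * r) powr pp)" using M1 by (simp add: algebra_simps)
  have pos1: "1 + (k * r) powr pp > 0" by (smt (verit) powr_ge_zero)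
  have pos2: "(max 1 r) powr pp > 0" by simp
  have "(max 1 r) powr pp \<le> M * (1 + (k * r) powr pp)" using a b by linarith
  then have "1 / (1 + (k * r) powr pp) \<le> M / (max 1 r) powr pp"
    using pos1 pos2 by (simp add: field_simps)
  also have "M / (max 1 r) powr pp = M * (max 1 r) powr (-pp)" by (simp add: powr_minus divide_inverse)
  finally show ?thesis unfolding M_def .
qed

lemma Ph_bound:
  fixes Nn :: "'a::euclidean_space \<Rightarrow> real"
  assumes an: "aniso_norm Nn" and s: "0 < s" and h: "0 < h"
  shows "\<exists>C\<ge>0. \<forall>z. kerPh Nn s h z \<le> C * (\<Prod>b\<in>Basis. (max 1 \<bar>z \<bullet> b\<bar>) powr (-((real DIM('a) + s) / real DIM('a))))"
proof -
  define N where "N = real DIM('a)"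
  have N1: "N \<ge> 1" unfolding N_def by (simp add: DIM_positive Suc_le_eq)
  define q where "q = (N + s) / N"
  define pp where "pp = N + s"
  have pp: "pp > 0" unfolding pp_def using N1 s by simp
  define c0 where "c0 = sigma_h s h powr (- real DIM('a) / s)"
  define c1 where "c1 = 1 / sigma_h s h powr (1 / s)"
  have sig: "sigma_h s h > 0" unfolding sigma_h_def using h by simp
  have c0: "c0 > 0" unfolding c0_def using sig by simp
  have c1: "c1 > 0" unfolding c1_def using sig by simp
  have F: "kerPh Nn s h z = c0 / (1 + (c1 * Nn z) powr pp)" for z
    unfolding c0_def c1_def pp_def N_def by (rule Ph_formula[OF an])
  obtain cl where cl: "cl > 0" "\<And>x. cl * norm x \<le> Nn x" using Nn_lower[OF an] by blast
  define k where "k = c1 * cl"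
  have k: "k > 0" unfolding k_def using c1 cl by simp
  define C where "C = c0 * max 1 (k powr (-pp))"
  have C0: "C \<ge> 0" unfolding C_def using c0 by simp
  have "kerPh Nn s h z \<le> C * (\<Prod>b\<in>Basis. (max 1 \<bar>z \<bullet> b\<bar>) powr (-q))" for z
  proof -
    define r where "r = norm z"
    have r0: "r \<ge> 0" unfolding r_def by simp
    have "(k * r) powr pp \<le> (c1 * Nn z) powr pp"
      using cl(2)[of z] c1 cl(1) r0 pp unfolding k_def r_def
      by (intro powr_mono2) (auto simp: mult.assoc)
    then have "kerPh Nn s h z \<le> c0 / (1 + (k * r) powr pp)"
      unfolding F using c0 by (intro divide_left_mono) (auto intro!: add_pos_nonneg mult_pos_pos simp: add_pos_nonneg)
    also have "\<dots> = c0 * (1 / (1 + (k * r) powr pp))" by simp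
    also have "\<dots> \<le> c0 * (max 1 (k powr (-pp)) * (max 1 r) powr (-pp))"
      using scalar_bound[OF r0 k pp] c0 by (intro mult_left_mono) auto
    also have "\<dots> = C * (max 1 r) powr (-pp)" unfolding C_def by simp
    also have "(max 1 r) powr (-pp) = (\<Prod>b\<in>(Basis::'a set). (max 1 r) powr (-q))"
    proof -
      have "(\<Prod>b\<in>(Basis::'a set). (max 1 r) powr (-q)) = ((max 1 r) powr (-q)) ^ DIM('a)" by simp
      also have "\<dots> = (max 1 r) powr (-q * N)" unfolding N_def by (simp add: powr_realpow[symmetric] powr_powr)
      also have "-q * N = -pp" unfolding q_def pp_def using N1 by (simp add: field_simps)
      finally show ?thesis by simp
    qed
    also have "C * \<dots> \<le> C * (\<Prod>b\<in>Basis. (max 1 \<bar>z \<bullet> b\<bar>) powr (-q))"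
    proof (intro mult_left_mono C0 prod_mono conjI)
      fix b :: 'a assume b: "b \<in> Basis"
      show "0 \<le> (max 1 r) powr (-q)" by simp
      have "\<bar>z \<bullet> b\<bar> \<le> r" unfolding r_def using b by (rule Basis_le_norm)
      then show "(max 1 r) powr (-q) \<le> (max 1 \<bar>z \<bullet> b\<bar>) powr (-q)"
        using N1 s unfolding q_def by (intro powr_mono2') (auto simp: max_def)
    qed
    finally show ?thesis .
  qed
  then show ?thesis using C0 unfolding q_def N_def by blast
qed

lemma sumB_meas[measurable]: "(\<lambda>f. \<Sum>b\<in>Basis. f b *\<^sub>R b) \<in> measurable (PL (Basis::'a::euclidean_space set)) borel"
  by measurable

lemma sumB_inner: "b \<in> Basis \<Longrightarrow> (\<Sum>b'\<in>Basis. f b' *\<^sub>R b') \<bullet> b = f (b::'a::euclidean_space)"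
  by (simp add: inner_sum_left inner_Basis if_distrib sum.delta cong: if_cong)

lemma sumB_mix: "(\<Sum>b\<in>Basis. mixf l f0 f1 b *\<^sub>R b) = (1-l) *\<^sub>R (\<Sum>b\<in>Basis. f0 b *\<^sub>R b) + l *\<^sub>R (\<Sum>b\<in>(Basis::'a::euclidean_space set). f1 b *\<^sub>R b)"
  by (simp add: mixf_def scaleR_add_left sum.distrib scaleR_sum_right)

lemma nn_lborel_PL:
  fixes g :: "'a::euclidean_space \<Rightarrow> ennreal"
  assumes [measurable]: "g \<in> borel_measurable borel"
  shows "(\<integral>\<^sup>+z. g z \<partial>lborel) = (\<integral>\<^sup>+f. g (\<Sum>b\<in>Basis. f b *\<^sub>R b) \<partial>PL (Basis::'a set))"
  by (subst lborel_eq) (simp add: nn_integral_distr)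

lemma U_quasi:
  fixes Nn :: "'a::euclidean_space \<Rightarrow> real" and E :: "'a set"
  assumes an: "aniso_norm Nn" and s: "0 < s" "s < 1" and h: "0 < h"
    and E: "convex E" "E \<in> sets borel" and l: "0 \<le> l" "l \<le> 1"
  defines "U \<equiv> (\<lambda>x. enn2real (\<integral>\<^sup>+z. ennreal (kerPh Nn s h z * indicator E (x - z)) \<partial>lborel))"
  shows "min (U x0) (U x1) \<le> U ((1-l) *\<^sub>R x0 + l *\<^sub>R x1)"
proof -
  define Ph where "Ph = kerPh Nn s h"
  note PP = Ph_props[OF an s h, folded Ph_def]
  have Phm[measurable]: "Ph \<in> borel_measurable borel" by (rule PP(3))
  have Em[measurable]: "E \<in> sets borel" by (rule E(2))
  define N where "N = real DIM('a)"
  have N1: "N \<ge> 1" unfolding N_def by (simp add: DIM_positive Suc_le_eq)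
  define q where "q = (N + s) / N"
  have q1: "q > 1" unfolding q_def using N1 s by (simp add: field_simps)
  define \<rho> where "\<rho> = (\<lambda>t::real. (max 1 \<bar>t\<bar>) powr (-q))"
  have RP: "\<And>t. 0 \<le> \<rho> t" "\<And>t. \<rho> t \<le> 1" "\<rho> \<in> borel_measurable lborel"
    "(\<integral>\<^sup>+t. ennreal (\<rho> t) \<partial>lborel) < \<infinity>"
    unfolding \<rho>_def using rho_props[OF q1] by auto
  define T where "T = (\<lambda>f::'a \<Rightarrow> real. \<Sum>b\<in>Basis. f b *\<^sub>R b)"
  have Tm[measurable]: "T \<in> measurable (PL (Basis::'a set)) borel" unfolding T_def by (rule sumB_meas)
  define G where "G = (\<lambda>x f. Ph (T f) * indicator E (x - T f))"
  have Gnn: "0 \<le> G x f" for x f unfolding G_def using PP(1) by (simp add: less_imp_le)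
  have Gm: "G x \<in> borel_measurable (PL Basis)" for x unfolding G_def by measurable
  have Gbd: "\<exists>C\<ge>0. \<forall>f\<in>space (PL Basis). G x f \<le> C * (\<Prod>i\<in>Basis. \<rho> (f i))" for x
  proof -
    obtain C where C: "C \<ge> 0" "\<And>z. Ph z \<le> C * (\<Prod>b\<in>Basis. (max 1 \<bar>z \<bullet> b\<bar>) powr (-((real DIM('a) + s) / real DIM('a))))"
      using Ph_bound[OF an s(1) h] unfolding Ph_def by blast
    have "G x f \<le> C * (\<Prod>i\<in>Basis. \<rho> (f i))" for f
    proof -
      have "G x f \<le> Ph (T f)" unfolding G_def using PP(1)[of "T f"] by (simp add: indicator_def)
      also have "\<dots> \<le> C * (\<Prod>b\<in>Basis. (max 1 \<bar>T f \<bullet> b\<bar>) powr (-((real DIM('a) + s) / real DIM('a))))" by (rule C(2))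
      also have "(\<Prod>b\<in>Basis. (max 1 \<bar>T f \<bullet> b\<bar>) powr (-((real DIM('a) + s) / real DIM('a)))) = (\<Prod>i\<in>Basis. \<rho> (f i))"
        unfolding \<rho>_def q_def N_def T_def by (intro prod.cong) (auto simp: sumB_inner)
      finally show ?thesis .
    qed
    then show ?thesis using C(1) by blast
  qed
  have Gcc: "kc (0 + card (Basis::'a set)) l' (G y0 f0) (G y1 f1) (G ((1-l') *\<^sub>R y0 + l' *\<^sub>R y1) (mixf l' f0 f1))"
    if "0 \<le> l'" "l' \<le> 1" "f0 \<in> space (PL Basis)" "f1 \<in> space (PL Basis)" for y0 y1 f0 f1 l'
  proof -
    have Tmix: "T (mixf l' f0 f1) = (1-l') *\<^sub>R T f0 + l' *\<^sub>R T f1" unfolding T_def by (rule sumB_mix)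
    {
      assume g0: "G y0 f0 > 0" and g1: "G y1 f1 > 0"
      have i0: "y0 - T f0 \<in> E" using g0 unfolding G_def by (cases "y0 - T f0 \<in> E") auto
      have i1: "y1 - T f1 \<in> E" using g1 unfolding G_def by (cases "y1 - T f1 \<in> E") auto
      have "(1-l') *\<^sub>R y0 + l' *\<^sub>R y1 - T (mixf l' f0 f1) = (1-l') *\<^sub>R (y0 - T f0) + l' *\<^sub>R (y1 - T f1)"
        unfolding Tmix by (simp add: algebra_simps)
      also have "\<dots> \<in> E" using convexD[OF E(1) i0 i1, of "1-l'" l'] that(1,2) by simp
      finally have im: "(1-l') *\<^sub>R y0 + l' *\<^sub>R y1 - T (mixf l' f0 f1) \<in> E" .
      have e0: "G y0 f0 = Ph (T f0)" and e1: "G y1 f1 = Ph (T f1)"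
        and em: "G ((1-l') *\<^sub>R y0 + l' *\<^sub>R y1) (mixf l' f0 f1) = Ph ((1-l') *\<^sub>R T f0 + l' *\<^sub>R T f1)"
        using i0 i1 im unfolding G_def Tmix by auto
      have "kc (0 + card (Basis::'a set)) l' (G y0 f0) (G y1 f1) (G ((1-l') *\<^sub>R y0 + l' *\<^sub>R y1) (mixf l' f0 f1))"
        unfolding e0 e1 em kc_def using PP(1) PP(2)[OF that(1,2)] DIM_positive[where 'a='a] by auto
    }
    then show ?thesis unfolding kc_def by auto
  qed
  have main: "kc 0 l (enn2real (\<integral>\<^sup>+f. ennreal (G x0 f) \<partial>PL Basis)) (enn2real (\<integral>\<^sup>+f. ennreal (G x1 f) \<partial>PL Basis))
      (enn2real (\<integral>\<^sup>+f. ennreal (G ((1-l) *\<^sub>R x0 + l *\<^sub>R x1) f) \<partial>PL Basis))"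
    apply (rule LN[where \<rho>=\<rho> and G=G and I=Basis and j=0])
    apply simp
    apply (rule RP)+
    apply (rule Gnn)
    apply (rule Gm)
    apply (rule Gbd)
    apply (rule Gcc; assumption)
    apply (rule l)+
    done
  have Ueq: "U x = enn2real (\<integral>\<^sup>+f. ennreal (G x f) \<partial>PL Basis)" for x
    unfolding U_def G_def Ph_def T_def by (subst nn_lborel_PL) (auto simp: Ph_def[symmetric])
  have "kc 0 l (U x0) (U x1) (U ((1-l) *\<^sub>R x0 + l *\<^sub>R x1))" using main unfolding Ueq .
  moreover have "U x \<ge> 0" for x unfolding U_def by simp
  ultimately show ?thesis using l by (intro kc_min[of 0 l]) auto
qed

lemma nn_reflect:
  fixes F :: "'a::euclidean_space \<Rightarrow> ennreal"
  assumes [measurable]: "F \<in> borel_measurable borel"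
  shows "(\<integral>\<^sup>+y. F y \<partial>lborel) = (\<integral>\<^sup>+z. F (x - z) \<partial>lborel)"
proof -
  show ?thesis
    by (subst (1) lborel_affine[of "-1" x]) (simp_all add: nn_integral_density nn_integral_distr)
qed

lemma Ph_finite:
  fixes Nn :: "'a::euclidean_space \<Rightarrow> real"
  assumes an: "aniso_norm Nn" and s: "0 < s" "s < 1" and h: "0 < h"
  shows "(\<integral>\<^sup>+z. ennreal (kerPh Nn s h z) \<partial>lborel) < \<infinity>"
proof -
  define Ph where "Ph = kerPh Nn s h"
  note PP = Ph_props[OF an s h, folded Ph_def]
  have Phm[measurable]: "Ph \<in> borel_measurable borel" by (rule PP(3))
  define N where "N = real DIM('a)"
  have N1: "N \<ge> 1" unfolding N_def by (simp add: DIM_positive Suc_le_eq)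
  define q where "q = (N + s) / N"
  have q1: "q > 1" unfolding q_def using N1 s by (simp add: field_simps)
  define \<rho> where "\<rho> = (\<lambda>t::real. (max 1 \<bar>t\<bar>) powr (-q))"
  have RP: "\<And>t. 0 \<le> \<rho> t" "\<And>t. \<rho> t \<le> 1" "\<rho> \<in> borel_measurable lborel"
    "(\<integral>\<^sup>+t. ennreal (\<rho> t) \<partial>lborel) < \<infinity>"
    unfolding \<rho>_def using rho_props[OF q1] by auto
  obtain C where C: "C \<ge> 0" "\<And>z. Ph z \<le> C * (\<Prod>b\<in>Basis. (max 1 \<bar>z \<bullet> b\<bar>) powr (-((real DIM('a) + s) / real DIM('a))))"
    using Ph_bound[OF an s(1) h] unfolding Ph_def by blast
  have "(\<integral>\<^sup>+z. ennreal (Ph z) \<partial>lborel) = (\<integral>\<^sup>+f. ennreal (Ph (\<Sum>b\<in>Basis. f b *\<^sub>R b)) \<partial>PL (Basis::'a set))"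
    by (rule nn_lborel_PL) measurable
  also have "\<dots> \<le> (\<integral>\<^sup>+f. ennreal C * ennreal (\<Prod>i\<in>Basis. \<rho> (f i)) \<partial>PL (Basis::'a set))"
  proof (intro nn_integral_mono)
    fix f :: "'a \<Rightarrow> real"
    have "Ph (\<Sum>b\<in>Basis. f b *\<^sub>R b) \<le> C * (\<Prod>i\<in>Basis. \<rho> (f i))"
      using C(2)[of "\<Sum>b\<in>Basis. f b *\<^sub>R b"] unfolding \<rho>_def q_def N_def by (simp add: sumB_inner cong: prod.cong)
    then show "ennreal (Ph (\<Sum>b\<in>Basis. f b *\<^sub>R b)) \<le> ennreal C * ennreal (\<Prod>i\<in>Basis. \<rho> (f i))"
      using C(1) RP(1) by (simp add: ennreal_mult[symmetric] prod_nonneg ennreal_leI)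
  qed
  also have "\<dots> = ennreal C * (\<integral>\<^sup>+t. ennreal (\<rho> t) \<partial>lborel) ^ card (Basis::'a set)"
    using RP(1,3) by (simp add: nn_integral_cmult bound_integral)
  also have "\<dots> < \<infinity>" using RP(4) by (simp add: ennreal_mult_less_top power_less_top_ennreal)
  finally show ?thesis unfolding Ph_def .
qed

theorem corollary4p3:
  fixes Nn :: "'a::euclidean_space \<Rightarrow> real" and s h c :: real and E :: "'a set"
  assumes "aniso_norm Nn" and "0 < s" and "s < 1"
    and "convex E" and "0 < h"
  shows "convex (Tset Nn s c h E)"
proof -
  note an = assms(1) and s = assms(2,3) and cE = assms(4) and h = assms(5)
  define Ph where "Ph = kerPh Nn s h"
  note PP = Ph_props[OF an s h, folded Ph_def]
  have Phm[measurable]: "Ph \<in> borel_measurable borel" by (rule PP(3))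
  define g where "g = (\<lambda>y. indicator E y - indicator (UNIV - E) y :: real)"
  define c' where "c' = c * h powr (s / (1 + s))"
  have T: "Tset Nn s c h E = {x. conv Ph g x > c'}"
    unfolding Tset_def Ph_def g_def c'_def by simp
  show ?thesis
  proof (cases "E \<in> sets borel")
    case False
    have "conv Ph g x = 0" for x
    proof -
      have "\<not> integrable lborel (\<lambda>y. Ph (x - y) * g y)"
      proof
        assume "integrable lborel (\<lambda>y. Ph (x - y) * g y)"
        then have m[measurable]: "(\<lambda>y. Ph (x - y) * g y) \<in> borel_measurable borel" by auto
        have "(\<lambda>y. ((Ph (x - y) * g y) / Ph (x - y) + 1) / 2) \<in> borel_measurable borel" by measurable
        moreover have "(\<lambda>y. ((Ph (x - y) * g y) / Ph (x - y) + 1) / 2) = (indicator E :: 'a \<Rightarrow> real)"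
        proof -
          have ne: "Ph (x - y) \<noteq> 0" for y using PP(1)[of "x - y"] by simp
          show ?thesis unfolding g_def using ne by (auto simp: fun_eq_iff indicator_def)
        qed
        ultimately have "(indicator E :: 'a \<Rightarrow> real) \<in> borel_measurable borel" by simp
        then have "E \<in> sets borel" by (simp add: borel_measurable_indicator_iff)
        with False show False by simp
      qed
      then show ?thesis unfolding conv_def by (rule not_integrable_integral_eq)
    qed
    then have "Tset Nn s c h E = {x. 0 > c'}" unfolding T by simp
    then show ?thesis by (cases "0 > c'") auto
  next
    case True
    note Em[measurable] = True
    define U where "U = (\<lambda>x. enn2real (\<integral>\<^sup>+z. ennreal (Ph z * indicator E (x - z)) \<partial>lborel))"
    define K where "K = enn2real (\<integral>\<^sup>+z. ennreal (Ph z) \<partial>lborel)"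
    have fin: "(\<integral>\<^sup>+z. ennreal (Ph z) \<partial>lborel) < \<infinity>" unfolding Ph_def by (rule Ph_finite[OF an s h])
    have conv_eq: "conv Ph g x = 2 * U x - K" for x
    proof -
      have eq1: "(\<integral>\<^sup>+y. ennreal (Ph (x - y)) \<partial>lborel) = (\<integral>\<^sup>+z. ennreal (Ph z) \<partial>lborel)"
        using nn_reflect[of "\<lambda>y. ennreal (Ph (x - y))" x] by simp
      have eq2: "(\<integral>\<^sup>+y. ennreal (Ph (x - y) * indicator E y) \<partial>lborel) = (\<integral>\<^sup>+z. ennreal (Ph z * indicator E (x - z)) \<partial>lborel)"
        using nn_reflect[of "\<lambda>y. ennreal (Ph (x - y) * indicator E y)" x] by simp
      have i1: "integrable lborel (\<lambda>y. Ph (x - y))"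
        using fin PP(1) unfolding eq1[symmetric] by (intro integrableI_nonneg) (auto simp: less_imp_le)
      have i2: "integrable lborel (\<lambda>y. Ph (x - y) * indicator E y)"
        using integrable_mult_indicator[OF _ i1, of E] by (simp add: mult.commute)
      have "conv Ph g x = (\<integral>y. 2 * (Ph (x - y) * indicator E y) - Ph (x - y) \<partial>lborel)"
        unfolding conv_def g_def by (intro Bochner_Integration.integral_cong) (auto simp: indicator_def)
      also have "\<dots> = 2 * (\<integral>y. Ph (x - y) * indicator E y \<partial>lborel) - (\<integral>y. Ph (x - y) \<partial>lborel)"
        using i1 i2 by simp
      also have "(\<integral>y. Ph (x - y) * indicator E y \<partial>lborel) = U x"
        unfolding U_def using PP(1) by (subst integral_eq_nn_integral) (auto simp: eq2 less_imp_le)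
      also have "(\<integral>y. Ph (x - y) \<partial>lborel) = K"
        unfolding K_def using PP(1) by (subst integral_eq_nn_integral) (auto simp: eq1 less_imp_le)
      finally show ?thesis .
    qed
    have T2: "Tset Nn s c h E = {x. 2 * U x - K > c'}" unfolding T conv_eq ..
    show ?thesis unfolding T2
    proof (rule convexI)
      fix x y :: 'a and u v :: real
      assume x: "x \<in> {x. 2 * U x - K > c'}" and y: "y \<in> {x. 2 * U x - K > c'}"
        and uv: "0 \<le> u" "0 \<le> v" "u + v = 1"
      then have l: "0 \<le> v" "v \<le> 1" and u: "u = 1 - v" by auto
      have "min (U x) (U y) \<le> U ((1-v) *\<^sub>R x + v *\<^sub>R y)"
        unfolding U_def Ph_def by (rule U_quasi[OF an s h cE True l])
      then show "u *\<^sub>R x + v *\<^sub>R y \<in> {x. 2 * U x - K > c'}"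
        using x y u by (auto simp: min_def split: if_splits)
    qed
  qed
qed

end
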